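(* Let $W$ be a stopping time in $\mathcal{T}$ and let $0<\rho<1$. Then $W_{\mathcal{T}}^{\rho}\subset\widehat{W_{\mathcal{T}}^{\rho}}$ as open subsets of the circle, that is, $S_{\mathcal{T}}(W_{\mathcal{T}}^{\rho})\subset S_{\mathcal{T}}(\widehat{W_{\mathcal{T}}^{\rho}})$. Consequently $Cap_{\mathcal{T}}W_{\mathcal{T}}^{\rho}\le\rho^{-2}Cap_{\mathcal{T}}W$.
   Context: Tree. $\mathcal{T}$ is the rooted dyadic tree whose vertices are the dyadic arcs of the unit circle. The root $o$ is the whole circle. The vertices at level $n\ge0$ are the arcs $\{e^{it}:2\pi j2^{-n}\le t<2\pi(j+1)2^{-n}\}$ for $0\le j<2^n$. Each vertex has two children, which are the two arcs at the next level contained in it. $I(x)$ denotes the arc of the vertex $x$. Write $y\le x$ if $x$ lies in the subtree rooted at $y$ (equivalently $I(x)\subset I(y)$), and $y<x$ if moreover $y\ne x$. $[o,x]=\{y:y\le x\}$. $d(x)$ is the number of vertices in $[o,x]$, so $d(o)=1$. A stopping time is a set of pairwise incomparable vertices. $\mathcal{G}(\{o\},W)$ is the union of $[o,w]$, $w\in W$. The shadow of a stopping time $W$ is $S_{\mathcal{T}}(W)=\bigcup_{x\in W}I(x)$. Capacity. For $f:\mathcal{T}\to\mathbb{R}$ put $If(x)=\sum_{y\in[o,x]}f(y)$, and define $Cap_{\mathcal{T}}(W)=\inf\{\|f\|^2_{\ell^2}:If\ge1\text{ on }W\}$. Stopping time blowup. For $0\le\rho\le1$ and $\kappa\in\mathcal{T}$,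 $R^\rho\kappa$ is the unique vertex with $o\le R^\rho\kappa\le\kappa$ and $\rho d(\kappa)\le d(R^\rho\kappa)<\rho d(\kappa)+1$. $W^\rho_{\mathcal{T}}$ is the set of minimal elements of $\{R^\rho\kappa:\kappa\in W\}$. Capacitary blowup. Let $h$ be the unique minimizer of $Cap_{\mathcal{T}}(W)$ and $H=Ih$, so $H=1$ on $W$ and $\|h\|^2=Cap_{\mathcal{T}}W$. Then $\widehat{W^\rho_{\mathcal{T}}}=\{t\in\mathcal{G}(\{o\},W):H(t)\ge\rho\text{ and }H(x)\le\rho\text{ for all }x<t\}$. *)

theory Defs
  imports "HOL-Analysis.Analysis"
begin

text \<open>Vertices of the dyadic tree: pairs (n, j) with j < 2^n, standing for the
  dyadic arc of level n with index j.  The root o is (0, 0).\<close>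

type_synonym vertex = "nat \<times> nat"

definition dyadic_tree :: "vertex set" where
  "dyadic_tree = {(n, j). j < 2 ^ n}"

definition root :: vertex where
  "root = (0, 0)"

definition arc :: "vertex \<Rightarrow> complex set" where
  "arc x = (case x of (n, j) \<Rightarrow>
     {exp (\<i> * complex_of_real t) | t. 2 * pi * real j / 2 ^ n \<le> t \<and> t < 2 * pi * (real j + 1) / 2 ^ n})"

text \<open>tree_le y x: x lies in the subtree rooted at y (y \<le> x).\<close>
definition tree_le :: "vertex \<Rightarrow> vertex \<Rightarrow> bool" where
  "tree_le y x = (case y of (m, i) \<Rightarrow> case x of (n, j) \<Rightarrow> m \<le> n \<and> j div 2 ^ (n - m) = i)"

definition tree_less :: "vertex \<Rightarrow> vertex \<Rightarrow> bool" where
  "tree_less y x = (tree_le y x \<and> y \<noteq> x)"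

definition depth :: "vertex \<Rightarrow> nat" where
  "depth x = card {y \<in> dyadic_tree. tree_le y x}"

definition stopping_time :: "vertex set \<Rightarrow> bool" where
  "stopping_time W = (W \<subseteq> dyadic_tree \<and>
     (\<forall>x\<in>W. \<forall>y\<in>W. tree_le x y \<longrightarrow> x = y))"

definition shadow :: "vertex set \<Rightarrow> complex set" where
  "shadow W = (\<Union>x\<in>W. arc x)"

definition geodesic_union :: "vertex set \<Rightarrow> vertex set" where
  "geodesic_union W = {t \<in> dyadic_tree. \<exists>w\<in>W. tree_le t w}"

definition potential :: "(vertex \<Rightarrow> real) \<Rightarrow> vertex \<Rightarrow> real" where
  "potential f x = (\<Sum>y\<in>{y \<in> dyadic_tree. tree_le y x}. f y)"

definition l2_sq :: "(vertex \<Rightarrow> real) \<Rightarrow> real" where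
  "l2_sq f = infsum (\<lambda>x. (f x)\<^sup>2) dyadic_tree"

definition admissible :: "vertex set \<Rightarrow> (vertex \<Rightarrow> real) \<Rightarrow> bool" where
  "admissible W f = ((\<forall>x. x \<notin> dyadic_tree \<longrightarrow> f x = 0) \<and>
     (\<lambda>x. (f x)\<^sup>2) summable_on dyadic_tree \<and> (\<forall>w\<in>W. potential f w \<ge> 1))"

definition capacity :: "vertex set \<Rightarrow> real" where
  "capacity W = Inf {l2_sq f | f. admissible W f}"

text \<open>The unique minimizer h of the capacity (functions are taken to vanish
  off the tree, so that the minimizer is unique as a function).\<close>
definition cap_minimizer :: "vertex set \<Rightarrow> vertex \<Rightarrow> real" where
  "cap_minimizer W = (THE h. admissible W h \<and> l2_sq h = capacity W)"

definition Rrho :: "real \<Rightarrow> vertex \<Rightarrow> vertex" where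
  "Rrho \<rho> \<kappa> = (THE y. y \<in> dyadic_tree \<and> tree_le root y \<and> tree_le y \<kappa> \<and>
      \<rho> * real (depth \<kappa>) \<le> real (depth y) \<and> real (depth y) < \<rho> * real (depth \<kappa>) + 1)"

definition minimal_elements :: "vertex set \<Rightarrow> vertex set" where
  "minimal_elements A = {y \<in> A. \<not> (\<exists>z\<in>A. tree_less z y)}"

definition blowup :: "real \<Rightarrow> vertex set \<Rightarrow> vertex set" where
  "blowup \<rho> W = minimal_elements (Rrho \<rho> ` W)"

definition cap_blowup :: "real \<Rightarrow> vertex set \<Rightarrow> vertex set" where
  "cap_blowup \<rho> W = (let H = potential (cap_minimizer W) in
     {t \<in> geodesic_union W. H t \<ge> \<rho> \<and> (\<forall>x. tree_less x t \<longrightarrow> H x \<le> \<rho>)})"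

end

theory Submission
  imports Defs
begin

lemma tree_le_iff: "tree_le (m,i) (n,j) \<longleftrightarrow> m \<le> n \<and> j div 2^(n-m) = i"
  by (simp add: tree_le_def)

lemma in_tree: "(n,j) \<in> dyadic_tree \<longleftrightarrow> j < 2^n"
  by (simp add: dyadic_tree_def)

lemma tree_le_trans:
  assumes "tree_le x y" "tree_le y z" shows "tree_le x z"
proof -
  obtain m i n j k l where xyz: "x = (m,i)" "y = (n,j)" "z = (k,l)" by (metis prod.exhaust)
  have "m \<le> n" "j div 2^(n-m) = i" "n \<le> k" "l div 2^(k-n) = j" using assms xyz by (auto simp: tree_le_iff)
  moreover have "2^(k-m) = (2::nat)^(k-n) * 2^(n-m)"
    using \<open>m \<le> n\<close> \<open>n \<le> k\<close> by (metis le_add_diff_inverse2 diff_add_inverse2 le_trans power_add add_diff_assoc2 diff_diff_left mult.commute)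
  ultimately show ?thesis using xyz by (auto simp: tree_le_iff div_mult2_eq)
qed

lemma tree_le_refl: "tree_le x x"
  by (cases x) (simp add: tree_le_iff)

lemma anc_in_tree: "tree_le y x \<Longrightarrow> x \<in> dyadic_tree \<Longrightarrow> y \<in> dyadic_tree"
proof -
  assume a: "tree_le y x" "x \<in> dyadic_tree"
  obtain m i n j where xy: "y = (m,i)" "x = (n,j)" by (metis prod.exhaust)
  have "m \<le> n" "i = j div 2^(n-m)" "j < 2^n" using a xy by (auto simp: tree_le_iff in_tree)
  moreover have "(2::nat)^n = 2^m * 2^(n-m)" using \<open>m \<le> n\<close> by (simp flip: power_add)
  ultimately have "i < 2^m" using less_mult_imp_div_less[of j "2^m" "2^(n-m)"] by simp
  then show ?thesis using xy by (simp add: in_tree)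
qed

lemma anc_set: "{y \<in> dyadic_tree. tree_le y (n,j)} \<subseteq> (\<lambda>m. (m, j div 2^(n-m))) ` {..n}"
  by (auto simp: tree_le_def)

lemma anc_set_eq: "j < 2^n \<Longrightarrow> {y \<in> dyadic_tree. tree_le y (n,j)} = (\<lambda>m. (m, j div 2^(n-m))) ` {..n}"
  apply (rule equalityI[OF anc_set])
  using anc_in_tree[of _ "(n,j)"] by (auto simp: tree_le_iff in_tree)

lemma finite_anc: "finite {y \<in> dyadic_tree. tree_le y x}"
  proof -
  obtain n j where "x = (n,j)" by (metis prod.exhaust)
  then show ?thesis using finite_subset[OF anc_set] by blast
qed

lemma depth_eq: "(n,j) \<in> dyadic_tree \<Longrightarrow> depth (n,j) = n + 1"
  unfolding depth_def
  by (subst anc_set_eq) (auto simp: in_tree card_image inj_on_def)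

lemma anc_level_eq:
  assumes "tree_le (m,i) x" "tree_le (m,i') x" shows "i = i'"
  using assms by (cases x) (auto simp: tree_le_iff)

lemma root_le: "y \<in> dyadic_tree \<Longrightarrow> tree_le root y"
  by (cases y) (simp add: root_def tree_le_iff in_tree)

lemma tree_le_level: "tree_le (m,i) (n,j) \<Longrightarrow> m \<le> n" by (simp add: tree_le_iff)


lemma Rrho_ex1:
  assumes "\<kappa> \<in> dyadic_tree" "0 < \<rho>" "\<rho> < 1"
  shows "\<exists>!y. y \<in> dyadic_tree \<and> tree_le root y \<and> tree_le y \<kappa> \<and>
      \<rho> * real (depth \<kappa>) \<le> real (depth y) \<and> real (depth y) < \<rho> * real (depth \<kappa>) + 1"
proof -
  obtain n j where k: "\<kappa> = (n,j)" by (metis prod.exhaust)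
  have jn: "j < 2^n" using assms k by (simp add: in_tree)
  have dk: "depth \<kappa> = n+1" using assms k depth_eq by simp
  define c where "c = \<lceil>\<rho> * real (n+1)\<rceil>"
  have c1: "c \<ge> 1" using assms unfolding c_def by (simp add: one_le_ceiling)
  have c2: "c \<le> int n + 1"
  proof -
    have "\<rho> * real (n+1) \<le> 1 * real (n+1)" by (rule mult_right_mono) (use assms in auto)
    moreover have "real (n+1) = real_of_int (int n + 1)" by simp
    ultimately show ?thesis unfolding c_def ceiling_le_iff by (metis mult_1)
  qed
  define m where "m = nat c - 1"
  have mn: "m \<le> n" using c1 c2 unfolding m_def by linarith
  have mc: "int (m + 1) = c" using c1 unfolding m_def by simp
  define y where "y = (m, j div 2^(n-m))"
  have yle: "tree_le y \<kappa>" using k y_def mn by (simp add: tree_le_iff)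
  have yt: "y \<in> dyadic_tree" using anc_in_tree[OF yle] assms by simp
  have dy: "depth y = m + 1" using yt y_def depth_eq by simp
  have P: "y \<in> dyadic_tree \<and> tree_le root y \<and> tree_le y \<kappa> \<and>
      \<rho> * real (depth \<kappa>) \<le> real (depth y) \<and> real (depth y) < \<rho> * real (depth \<kappa>) + 1"
  proof -
    have "real (m+1) = real_of_int c" using mc by (metis of_int_of_nat_eq)
    then have "\<rho> * real (n+1) \<le> real (m+1)" "real (m+1) < \<rho> * real (n+1) + 1"
      unfolding c_def by (simp_all add: ceiling_correct) linarith
    then show ?thesis using yt yle dy dk root_le[OF yt] by simp
  qed
  show ?thesis
  proof (rule ex1I[of _ y])
    show "y \<in> dyadic_tree \<and> tree_le root y \<and> tree_le y \<kappa> \<and>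
      \<rho> * real (depth \<kappa>) \<le> real (depth y) \<and> real (depth y) < \<rho> * real (depth \<kappa>) + 1" by (rule P)
  next
    fix z assume z: "z \<in> dyadic_tree \<and> tree_le root z \<and> tree_le z \<kappa> \<and>
      \<rho> * real (depth \<kappa>) \<le> real (depth z) \<and> real (depth z) < \<rho> * real (depth \<kappa>) + 1"
    obtain m' i' where zz: "z = (m',i')" by (metis prod.exhaust)
    have dz: "depth z = m'+1" using z zz depth_eq by simp
    have "real (m'+1) < real (m+1) + 1" "real (m+1) < real (m'+1) + 1"
      using z P dz dy by linarith+
    then have "m' = m" by linarith
    then show "z = y" using anc_level_eq[of m' i' \<kappa> "j div 2^(n-m)"] z zz yle y_def by auto
  qed
qed

lemma Rrho_props:
  assumes "\<kappa> \<in> dyadic_tree" "0 < \<rho>" "\<rho> < 1"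
  shows "Rrho \<rho> \<kappa> \<in> dyadic_tree \<and> tree_le (Rrho \<rho> \<kappa>) \<kappa> \<and>
      \<rho> * real (depth \<kappa>) \<le> real (depth (Rrho \<rho> \<kappa>))"
  using theI'[OF Rrho_ex1[OF assms]] unfolding Rrho_def by blast

lemma avg_ineq:
  fixes s :: "nat \<Rightarrow> real"
  assumes mono: "\<And>a b. a \<le> b \<Longrightarrow> b \<le> n \<Longrightarrow> s b \<le> s a" and kn: "k \<le> n"
  shows "real (k+1) * (\<Sum>m\<le>n. s m) \<le> real (n+1) * (\<Sum>m\<le>k. s m)"
proof -
  have split: "(\<Sum>m\<le>n. s m) = (\<Sum>m\<le>k. s m) + (\<Sum>m\<in>{k<..n}. s m)"
  proof -
    have "{..n} = {..k} \<union> {k<..n}" using kn by auto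
    moreover have "{..k} \<inter> {k<..n} = {}" by auto
    ultimately show ?thesis by (simp add: sum.union_disjoint)
  qed
  have A: "real (k+1) * s k \<le> (\<Sum>m\<le>k. s m)"
  proof -
    have "(\<Sum>m\<le>k. s k) \<le> (\<Sum>m\<le>k. s m)" by (rule sum_mono) (use mono kn in auto)
    then show ?thesis by simp
  qed
  have B: "(\<Sum>m\<in>{k<..n}. s m) \<le> real (n-k) * s k"
  proof -
    have "(\<Sum>m\<in>{k<..n}. s m) \<le> (\<Sum>m\<in>{k<..n}. s k)" by (rule sum_mono) (use mono in auto)
    then show ?thesis by simp
  qed
  have "real (k+1) * (\<Sum>m\<le>n. s m) = real (k+1) * (\<Sum>m\<le>k. s m) + real (k+1) * (\<Sum>m\<in>{k<..n}. s m)"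
    by (simp add: split distrib_left)
  also have "\<dots> \<le> real (k+1) * (\<Sum>m\<le>k. s m) + real (k+1) * (real (n-k) * s k)"
    using B by (intro add_left_mono mult_left_mono) auto
  also have "\<dots> = real (k+1) * (\<Sum>m\<le>k. s m) + real (n-k) * (real (k+1) * s k)" by simp
  also have "\<dots> \<le> real (k+1) * (\<Sum>m\<le>k. s m) + real (n-k) * (\<Sum>m\<le>k. s m)"
    using A by (intro add_left_mono mult_left_mono) auto
  also have "\<dots> = real (n+1) * (\<Sum>m\<le>k. s m)" using kn by (simp add: algebra_simps of_nat_diff)
  finally show ?thesis .
qed


lemma lin_aux: "x + y = s/2 \<Longrightarrow> 0 \<le> x \<Longrightarrow> 0 \<le> y \<Longrightarrow> 0 \<le> s \<Longrightarrow> x \<le> (s::real) \<and> y \<le> s"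
  by linarith

lemma sq_ineq: "((a + b)/2)\<^sup>2 \<le> a\<^sup>2 + (b::real)\<^sup>2" "((a - b)/2)\<^sup>2 \<le> a\<^sup>2 + (b::real)\<^sup>2"
proof -
  have id: "((a + b)/2)\<^sup>2 + ((a - b)/2)\<^sup>2 = (a\<^sup>2 + b\<^sup>2)/2"
    by (simp add: power2_eq_square field_simps)
  have "0 \<le> ((a + b)/2)\<^sup>2" "0 \<le> ((a - b)/2)\<^sup>2" "0 \<le> a\<^sup>2 + b\<^sup>2" by simp_all
  from lin_aux[OF id this] show "((a + b)/2)\<^sup>2 \<le> a\<^sup>2 + (b::real)\<^sup>2" "((a - b)/2)\<^sup>2 \<le> a\<^sup>2 + (b::real)\<^sup>2"
    by auto
qed

lemma sq_sum_summable:
  fixes f g :: "vertex \<Rightarrow> real"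
  assumes "(\<lambda>x. (f x)\<^sup>2) summable_on A" "(\<lambda>x. (g x)\<^sup>2) summable_on A"
  shows "(\<lambda>x. ((f x + g x)/2)\<^sup>2) summable_on A" "(\<lambda>x. ((f x - g x)/2)\<^sup>2) summable_on A"
proof -
  have s: "(\<lambda>x. (f x)\<^sup>2 + (g x)\<^sup>2) summable_on A" using summable_on_add[OF assms] .
  show "(\<lambda>x. ((f x + g x)/2)\<^sup>2) summable_on A"
    by (rule summable_on_comparison_test[OF s], rule sq_ineq(1), simp)
  show "(\<lambda>x. ((f x - g x)/2)\<^sup>2) summable_on A"
    by (rule summable_on_comparison_test[OF s], rule sq_ineq(2), simp)
qed

lemma parallelogram:
  fixes f g :: "vertex \<Rightarrow> real"
  assumes "(\<lambda>x. (f x)\<^sup>2) summable_on A" "(\<lambda>x. (g x)\<^sup>2) summable_on A"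
  shows "infsum (\<lambda>x. ((f x + g x)/2)\<^sup>2) A =
     (infsum (\<lambda>x. (f x)\<^sup>2) A + infsum (\<lambda>x. (g x)\<^sup>2) A)/2 - infsum (\<lambda>x. ((f x - g x)/2)\<^sup>2) A"
proof -
  have e: "\<And>x. ((f x + g x)/2)\<^sup>2 = ((f x)\<^sup>2 + (g x)\<^sup>2) * (1/2) + - (((f x - g x)/2)\<^sup>2)"
    by (simp add: power2_eq_square field_simps)
  have s1: "(\<lambda>x. ((f x)\<^sup>2 + (g x)\<^sup>2) * (1/2)) summable_on A"
    by (rule summable_on_cmult_left, rule summable_on_add[OF assms])
  have s2: "(\<lambda>x. - (((f x - g x)/2)\<^sup>2)) summable_on A"
    using sq_sum_summable(2)[OF assms] by (simp add: summable_on_uminus)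
  have "infsum (\<lambda>x. ((f x + g x)/2)\<^sup>2) A =
      infsum (\<lambda>x. ((f x)\<^sup>2 + (g x)\<^sup>2) * (1/2)) A + infsum (\<lambda>x. - (((f x - g x)/2)\<^sup>2)) A"
    unfolding e by (rule infsum_add[OF s1 s2])
  also have "\<dots> = (infsum (\<lambda>x. (f x)\<^sup>2) A + infsum (\<lambda>x. (g x)\<^sup>2) A) * (1/2)
      - infsum (\<lambda>x. ((f x - g x)/2)\<^sup>2) A"
    apply (subst infsum_cmult_left)
     apply (rule summable_on_add[OF assms])
    apply (subst infsum_add[OF assms])
    apply (subst infsum_uminus)
    by simp
  finally show ?thesis by simp
qed

lemma l2_nonneg: "0 \<le> l2_sq f"
  unfolding l2_sq_def by (rule infsum_nonneg) simp

lemma cap_lower: "admissible W f \<Longrightarrow> capacity W \<le> l2_sq f"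
  unfolding capacity_def
  by (rule cInf_lower) (auto intro!: bdd_belowI[where m=0] l2_nonneg)

lemma potential_mid: "potential (\<lambda>x. (f x + g x)/2) w = (potential f w + potential g w)/2"
  unfolding potential_def by (simp add: sum.distrib flip: sum_divide_distrib)

lemma admissible_mid:
  assumes "admissible W f" "admissible W g"
  shows "admissible W (\<lambda>x. (f x + g x)/2)"
proof -
  have "potential (\<lambda>x. (f x + g x)/2) w \<ge> 1" if "w \<in> W" for w
    using assms that unfolding admissible_def potential_mid by fastforce
  then show ?thesis
    using assms sq_sum_summable(1)[of f dyadic_tree g] unfolding admissible_def by auto
qed

lemma admissible_root:
  assumes "W \<subseteq> dyadic_tree"
  shows "admissible W (\<lambda>x. if x = root then 1 else 0)"
proof -
  have rt: "root \<in> dyadic_tree" by (simp add: root_def in_tree)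
  have "(\<lambda>x. ((\<lambda>x. if x = root then 1 else 0::real) x)\<^sup>2) summable_on dyadic_tree"
    by (rule summable_on_cong_neutral[where T="{root}" and g="\<lambda>x. 1", THEN iffD2]) (auto simp: rt)
  moreover have "potential (\<lambda>x. if x = root then 1 else 0) w = 1" if "w \<in> W" for w
  proof -
    have "root \<in> {y \<in> dyadic_tree. tree_le y w}" using that assms rt root_le by blast
    then show ?thesis unfolding potential_def using finite_anc[of w]
      by (simp add: sum.delta)
  qed
  ultimately show ?thesis unfolding admissible_def using rt by auto
qed

lemma cap_approx:
  assumes "W \<subseteq> dyadic_tree" "e > 0"
  shows "\<exists>f. admissible W f \<and> l2_sq f < capacity W + e"
proof -
  have ne: "{l2_sq f | f. admissible W f} \<noteq> {}" using admissible_root[OF assms(1)] by auto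
  have "Inf {l2_sq f | f. admissible W f} < capacity W + e" using assms unfolding capacity_def by simp
  from cInf_lessD[OF ne this] show ?thesis by auto
qed


lemma lin2: "a < c + x \<Longrightarrow> b < c + y \<Longrightarrow> (a+b)/2 - c < (x+y)/(2::real)"
  by (simp add: field_simps)

lemma minimizer_unique:
  assumes "admissible W h1" "l2_sq h1 = capacity W" "admissible W h2" "l2_sq h2 = capacity W"
  shows "h1 = h2"
proof -
  have s1: "(\<lambda>x. (h1 x)\<^sup>2) summable_on dyadic_tree" and s2: "(\<lambda>x. (h2 x)\<^sup>2) summable_on dyadic_tree"
    using assms unfolding admissible_def by auto
  have "capacity W \<le> l2_sq (\<lambda>x. (h1 x + h2 x)/2)" by (rule cap_lower, rule admissible_mid) (use assms in auto)
  also have "\<dots> = capacity W - infsum (\<lambda>x. ((h1 x - h2 x)/2)\<^sup>2) dyadic_tree"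
    unfolding l2_sq_def parallelogram[OF s1 s2] using assms unfolding l2_sq_def by simp
  finally have le: "infsum (\<lambda>x. ((h1 x - h2 x)/2)\<^sup>2) dyadic_tree \<le> 0" by simp
  show ?thesis
  proof
    fix x show "h1 x = h2 x"
    proof (cases "x \<in> dyadic_tree")
      case True
      have "((h1 x - h2 x)/2)\<^sup>2 = 0"
        by (rule nonneg_infsum_le_0D[OF le sq_sum_summable(2)[OF s1 s2] _ True]) simp
      then show ?thesis by simp
    next
      case False then show ?thesis using assms(1,3) unfolding admissible_def by metis
    qed
  qed
qed

lemma minimizer_exists:
  assumes W: "W \<subseteq> dyadic_tree"
  shows "\<exists>h. admissible W h \<and> l2_sq h = capacity W"
proof -
  define cap where "cap = capacity W"
  have "\<forall>n. \<exists>f. admissible W f \<and> l2_sq f < cap + inverse (real (Suc n))"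
    using cap_approx[OF W] unfolding cap_def by simp
  then obtain f where f: "\<And>n. admissible W (f n)" "\<And>n. l2_sq (f n) < cap + inverse (real (Suc n))"
    by metis
  have sq: "\<And>n. (\<lambda>x. (f n x)\<^sup>2) summable_on dyadic_tree" using f unfolding admissible_def by auto
  have capf: "\<And>n. cap \<le> l2_sq (f n)" unfolding cap_def by (rule cap_lower[OF f(1)])
  have pt: "((f n x - f m x)/2)\<^sup>2 < inverse (real (Suc M))"
    if x: "x \<in> dyadic_tree" and nm: "n \<ge> M" "m \<ge> M" for x n m M
  proof -
    have "((f n x - f m x)/2)\<^sup>2 \<le> infsum (\<lambda>x. ((f n x - f m x)/2)\<^sup>2) dyadic_tree"
      using finite_sum_le_infsum[OF sq_sum_summable(2)[OF sq sq], of "{x}"] x by simp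
    also have "\<dots> = (l2_sq (f n) + l2_sq (f m))/2 - l2_sq (\<lambda>x. (f n x + f m x)/2)"
      unfolding l2_sq_def parallelogram[OF sq sq] by simp
    also have "\<dots> \<le> (l2_sq (f n) + l2_sq (f m))/2 - cap"
      using cap_lower[OF admissible_mid[OF f(1) f(1)]] unfolding cap_def by simp
    also have "\<dots> < (inverse (real (Suc n)) + inverse (real (Suc m)))/2"
      by (rule lin2[OF f(2)[of n] f(2)[of m]])
    also have "\<dots> \<le> (inverse (real (Suc M)) + inverse (real (Suc M)))/2"
      using nm by (intro divide_right_mono add_mono le_imp_inverse_le) auto
    finally show ?thesis by simp
  qed
  have cauchy: "Cauchy (\<lambda>n. f n x)" if x: "x \<in> dyadic_tree" for x
  proof (rule CauchyI)
    fix e :: real assume e: "e > 0"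
    obtain M where M: "inverse (real (Suc M)) < (e/2)\<^sup>2"
      using reals_Archimedean[of "(e/2)\<^sup>2"] e by auto
    show "\<exists>M. \<forall>m\<ge>M. \<forall>n\<ge>M. norm (f m x - f n x) < e"
    proof (intro exI allI impI)
      fix m n assume "m \<ge> M" "n \<ge> M"
      then have "((f m x - f n x)/2)\<^sup>2 < (e/2)\<^sup>2" using pt[OF x] M by (meson less_trans)
      then have "\<bar>(f m x - f n x)/2\<bar> < e/2"
        using e by (metis abs_ge_zero abs_of_pos half_gt_zero power2_abs power_less_imp_less_base)
      then show "norm (f m x - f n x) < e" by simp
    qed
  qed
  define g where "g x = (if x \<in> dyadic_tree then lim (\<lambda>n. f n x) else 0)" for x
  have gl: "(\<lambda>n. f n x) \<longlonglongrightarrow> g x" if "x \<in> dyadic_tree" for x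
    using cauchy[OF that] that unfolding g_def by (simp add: Cauchy_convergent_iff convergent_LIMSEQ_iff)
  have lim_cap: "(\<lambda>n. cap + inverse (real (Suc n))) \<longlonglongrightarrow> cap"
    using tendsto_add[OF tendsto_const LIMSEQ_inverse_real_of_nat, of cap] by simp
  have fin: "sum (\<lambda>x. (g x)\<^sup>2) F \<le> cap" if F: "finite F" "F \<subseteq> dyadic_tree" for F
  proof -
    have "(\<lambda>n. sum (\<lambda>x. (f n x)\<^sup>2) F) \<longlonglongrightarrow> sum (\<lambda>x. (g x)\<^sup>2) F"
      by (rule tendsto_sum, rule tendsto_power, rule gl) (use F in auto)
    moreover have "sum (\<lambda>x. (f n x)\<^sup>2) F \<le> cap + inverse (real (Suc n))" for n
    proof -
      have "sum (\<lambda>x. (f n x)\<^sup>2) F \<le> l2_sq (f n)"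
        unfolding l2_sq_def by (rule finite_sum_le_infsum[OF sq F]) simp
      then show ?thesis using f(2)[of n] by simp
    qed
    ultimately show ?thesis using LIMSEQ_le[OF _ lim_cap] by blast
  qed
  have gsum: "(\<lambda>x. (g x)\<^sup>2) summable_on dyadic_tree"
    by (rule nonneg_bdd_above_summable_on) (auto intro!: bdd_aboveI[where M=cap] fin)
  have gle: "l2_sq g \<le> cap"
    unfolding l2_sq_def by (rule infsum_le_finite_sums[OF gsum fin])
  have gpot: "potential g w \<ge> 1" if w: "w \<in> W" for w
  proof -
    have "(\<lambda>n. potential (f n) w) \<longlonglongrightarrow> potential g w"
      unfolding potential_def by (rule tendsto_sum, rule gl) auto
    moreover have "\<And>n. 1 \<le> potential (f n) w" using f(1) w unfolding admissible_def by auto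
    ultimately show ?thesis by (meson LIMSEQ_le_const)
  qed
  have ga: "admissible W g" unfolding admissible_def using gsum gpot by (auto simp: g_def)
  show ?thesis using ga gle cap_lower[OF ga] unfolding cap_def by (intro exI[of _ g]) auto
qed

lemma cap_minimizer_props:
  assumes "W \<subseteq> dyadic_tree"
  shows "admissible W (cap_minimizer W) \<and> l2_sq (cap_minimizer W) = capacity W"
proof -
  have "\<exists>!h. admissible W h \<and> l2_sq h = capacity W"
    using minimizer_exists[OF assms] minimizer_unique by blast
  then show ?thesis unfolding cap_minimizer_def by (rule theI')
qed


lemma div_div_pow: "m \<le> k \<Longrightarrow> k \<le> n \<Longrightarrow> (j::nat) div 2^(n-k) div 2^(k-m) = j div 2^(n-m)"
proof -
  assume a: "m \<le> k" "k \<le> n"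
  have "(2::nat)^(n-m) = 2^(n-k) * 2^(k-m)" using a by (simp flip: power_add)
  then show ?thesis by (simp add: div_mult2_eq)
qed

lemma minimizer_nonneg:
  assumes W: "W \<subseteq> dyadic_tree"
  shows "cap_minimizer W x \<ge> 0"
proof -
  define h where "h = cap_minimizer W"
  have hp: "admissible W h" "l2_sq h = capacity W" using cap_minimizer_props[OF W] h_def by auto
  have a: "admissible W (\<lambda>x. \<bar>h x\<bar>)"
  proof -
    have "potential h w \<le> potential (\<lambda>x. \<bar>h x\<bar>) w" for w
      unfolding potential_def by (rule sum_mono) simp
    then show ?thesis using hp(1) unfolding admissible_def by (auto intro: order_trans)
  qed
  have "l2_sq (\<lambda>x. \<bar>h x\<bar>) = capacity W" using hp(2) unfolding l2_sq_def by simp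
  then have "(\<lambda>x. \<bar>h x\<bar>) = h" using minimizer_unique[OF a _ hp] by simp
  then have "\<bar>h x\<bar> = h x" by metis
  then show ?thesis unfolding h_def by (metis abs_ge_zero)
qed

lemma minimizer_mono:
  assumes W: "W \<subseteq> dyadic_tree" and c: "(Suc n, j) \<in> dyadic_tree"
  shows "cap_minimizer W (Suc n, j) \<le> cap_minimizer W (n, j div 2)"
proof -
  define h where "h = cap_minimizer W"
  have hp: "admissible W h" "l2_sq h = capacity W" using cap_minimizer_props[OF W] h_def by auto
  have hnn: "\<And>x. h x \<ge> 0" using minimizer_nonneg[OF W] h_def by auto
  define i where "i = j div 2"
  define p where "p = (n, i)"
  define c0 where "c0 = (Suc n, 2*i)"
  define c1 where "c1 = (Suc n, 2*i+1)"
  have jc: "j = 2*i \<or> j = 2*i+1" unfolding i_def by auto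
  have i2: "i < 2^n" using c unfolding i_def in_tree by (simp add: less_mult_imp_div_less mult.commute)
  have c0t: "c0 \<in> dyadic_tree" "c1 \<in> dyadic_tree" "p \<in> dyadic_tree"
    using i2 unfolding c0_def c1_def p_def by (auto simp: in_tree)
  have pc: "tree_le p c0" "tree_le p c1" unfolding p_def c0_def c1_def by (auto simp: tree_le_iff)
  have dist: "p \<noteq> c0" "p \<noteq> c1" "c0 \<noteq> c1" unfolding p_def c0_def c1_def by auto
  define e where "e x = (if x = p then 1 else 0) - (if x = c0 then 1 else 0) - (if x = c1 then (1::real) else 0)" for x
  have key: "h c0 + h c1 \<le> h p"
  proof (rule ccontr)
    assume "\<not> h c0 + h c1 \<le> h p"
    define \<delta> where "\<delta> = (h c0 + h c1 - h p) / 3"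
    have dpos: "\<delta> > 0" using \<open>\<not> h c0 + h c1 \<le> h p\<close> unfolding \<delta>_def by simp
    define h' where "h' x = h x + \<delta> * e x" for x
    define k where "k x = 2 * \<delta> * h x * e x + \<delta>\<^sup>2 * (e x)\<^sup>2" for x
    have hk: "(h' x)\<^sup>2 = (h x)\<^sup>2 + k x" for x unfolding h'_def k_def by (simp add: power2_eq_square algebra_simps)
    have k0: "x \<notin> {p, c0, c1} \<Longrightarrow> k x = 0" for x unfolding k_def e_def by auto
    have ksum: "k summable_on dyadic_tree"
      by (rule summable_on_cong_neutral[where T="{p,c0,c1}" and g=k, THEN iffD2]) (use k0 c0t in auto)
    have kinf: "infsum k dyadic_tree = k p + k c0 + k c1"
    proof -
      have "infsum k dyadic_tree = infsum k {p,c0,c1}"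
        by (rule infsum_cong_neutral) (use k0 c0t in auto)
      also have "\<dots> = k p + k c0 + k c1" using dist by simp
      finally show ?thesis .
    qed
    have kval: "k p + k c0 + k c1 = 2 * \<delta> * (h p - h c0 - h c1) + 3 * \<delta>\<^sup>2"
      unfolding k_def e_def using dist by (simp add: algebra_simps)
    have hsum: "(\<lambda>x. (h x)\<^sup>2) summable_on dyadic_tree" using hp(1) unfolding admissible_def by auto
    have l2': "l2_sq h' = l2_sq h + (2 * \<delta> * (h p - h c0 - h c1) + 3 * \<delta>\<^sup>2)"
      unfolding l2_sq_def hk using infsum_add[OF hsum ksum] kinf kval by simp
    have adm': "admissible W h'"
    proof -
      have z: "\<forall>x. x \<notin> dyadic_tree \<longrightarrow> h' x = 0"
        using hp(1) c0t unfolding admissible_def h'_def e_def by auto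
      have s: "(\<lambda>x. (h' x)\<^sup>2) summable_on dyadic_tree" unfolding hk by (rule summable_on_add[OF hsum ksum])
      have pot: "potential h' w \<ge> 1" if w: "w \<in> W" for w
      proof -
        define A where "A = {y \<in> dyadic_tree. tree_le y w}"
        have fA: "finite A" unfolding A_def by (rule finite_anc)
        have "potential h' w = potential h w + \<delta> * sum e A"
          unfolding potential_def h'_def A_def by (simp add: sum.distrib sum_distrib_left)
        moreover have "sum e A \<ge> 0"
        proof -
          have se: "sum e A = (if p \<in> A then 1 else 0) - (if c0 \<in> A then 1 else 0) - (if c1 \<in> A then 1 else 0)"
            unfolding e_def using fA by (simp add: sum_subtractf sum.delta)
          have "c0 \<in> A \<Longrightarrow> p \<in> A" "c1 \<in> A \<Longrightarrow> p \<in> A"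
            unfolding A_def using pc c0t tree_le_trans by blast+
          moreover have "\<not> (c0 \<in> A \<and> c1 \<in> A)"
            unfolding A_def c0_def c1_def using anc_level_eq[of "Suc n" "2*i" w "2*i+1"] by auto
          ultimately show ?thesis using se by auto
        qed
        ultimately have "potential h' w \<ge> potential h w" using dpos by simp
        then show ?thesis using hp(1) w unfolding admissible_def by force
      qed
      show ?thesis unfolding admissible_def using z s pot by auto
    qed
    have "l2_sq h \<le> l2_sq h'" using cap_lower[OF adm'] hp(2) by simp
    then have "0 \<le> 2 * \<delta> * (h p - h c0 - h c1) + 3 * \<delta>\<^sup>2" using l2' by simp
    moreover have "h p - h c0 - h c1 = -3 * \<delta>" unfolding \<delta>_def by simp
    ultimately have "0 \<le> - 3 * \<delta>\<^sup>2" by (simp add: power2_eq_square)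
    then show False using mult_pos_pos[OF dpos dpos] by (simp add: power2_eq_square)
  qed
  have "h (Suc n, j) \<le> h p" using key jc hnn unfolding c0_def c1_def
    by (metis add.commute add_increasing2 le_add_same_cancel1 order.trans)
  then show ?thesis unfolding h_def p_def i_def .
qed


lemma potential_path:
  assumes "j < 2^n" "k \<le> n"
  shows "potential f (k, j div 2^(n-k)) = (\<Sum>m\<le>k. f (m, j div 2^(n-m)))"
proof -
  have jk: "j div 2^(n-k) < 2^k"
    using anc_in_tree[of "(k, j div 2^(n-k))" "(n,j)"] assms by (simp add: tree_le_iff in_tree)
  have "{y \<in> dyadic_tree. tree_le y (k, j div 2^(n-k))} = (\<lambda>m. (m, j div 2^(n-k) div 2^(k-m))) ` {..k}"
    by (rule anc_set_eq[OF jk])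
  also have "\<dots> = (\<lambda>m. (m, j div 2^(n-m))) ` {..k}"
    using assms div_div_pow by (intro image_cong) auto
  finally show ?thesis unfolding potential_def
    by (simp add: sum.reindex inj_on_def)
qed

lemma path_antitone:
  assumes W: "W \<subseteq> dyadic_tree" and j: "j < 2^n"
  shows "a \<le> b \<Longrightarrow> b \<le> n \<Longrightarrow> cap_minimizer W (b, j div 2^(n-b)) \<le> cap_minimizer W (a, j div 2^(n-a))"
proof (induction b)
  case 0 then show ?case by simp
next
  case (Suc b)
  show ?case
  proof (cases "a = Suc b")
    case True then show ?thesis by simp
  next
    case False
    then have ab: "a \<le> b" using Suc by simp
    have t: "(Suc b, j div 2^(n - Suc b)) \<in> dyadic_tree"
      using anc_in_tree[of "(Suc b, j div 2^(n-Suc b))" "(n,j)"] j Suc by (simp add: tree_le_iff in_tree)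
    have "j div 2^(n - Suc b) div 2 = j div 2^(n-b)"
      using div_div_pow[of b "Suc b" n j] Suc by simp
    then have "cap_minimizer W (Suc b, j div 2^(n - Suc b)) \<le> cap_minimizer W (b, j div 2^(n-b))"
      using minimizer_mono[OF W t] by simp
    then show ?thesis using Suc ab by simp
  qed
qed

lemma H_ge:
  assumes st: "stopping_time W" and r: "0 < \<rho>" "\<rho> < 1" and k: "\<kappa> \<in> W"
  shows "\<rho> \<le> potential (cap_minimizer W) (Rrho \<rho> \<kappa>)"
proof -
  have W: "W \<subseteq> dyadic_tree" using st unfolding stopping_time_def by auto
  define h where "h = cap_minimizer W"
  have hp: "admissible W h" using cap_minimizer_props[OF W] h_def by auto
  have kt: "\<kappa> \<in> dyadic_tree" using k W by auto
  obtain n j where kk: "\<kappa> = (n,j)" by (metis prod.exhaust)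
  have jn: "j < 2^n" using kt kk by (simp add: in_tree)
  obtain k i where yy: "Rrho \<rho> \<kappa> = (k,i)" by (metis prod.exhaust)
  have R: "Rrho \<rho> \<kappa> \<in> dyadic_tree" "tree_le (Rrho \<rho> \<kappa>) \<kappa>" "\<rho> * real (depth \<kappa>) \<le> real (depth (Rrho \<rho> \<kappa>))"
    using Rrho_props[OF kt r] by auto
  have kn: "k \<le> n" and ii: "i = j div 2^(n-k)" using R(2) yy kk by (auto simp: tree_le_iff)
  have dep: "\<rho> * real (n+1) \<le> real (k+1)" using R(3) R(1) kt yy kk depth_eq by simp
  define s where "s m = h (m, j div 2^(n-m))" for m
  have anti: "\<And>a b. a \<le> b \<Longrightarrow> b \<le> n \<Longrightarrow> s b \<le> s a"
    unfolding s_def h_def using path_antitone[OF W jn] by blast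
  have Hk: "potential h \<kappa> = (\<Sum>m\<le>n. s m)"
    using potential_path[OF jn order.refl, of h] kk unfolding s_def by simp
  have Hy: "potential h (Rrho \<rho> \<kappa>) = (\<Sum>m\<le>k. s m)"
    using potential_path[OF jn kn, of h] yy ii unfolding s_def by simp
  have H1: "1 \<le> potential h \<kappa>" using hp k unfolding admissible_def by auto
  have avg: "real (k+1) * (\<Sum>m\<le>n. s m) \<le> real (n+1) * (\<Sum>m\<le>k. s m)"
    by (rule avg_ineq[OF anti kn])
  have "\<rho> * real (n+1) \<le> real (k+1) * (\<Sum>m\<le>n. s m)"
  proof -
    have "\<rho> * real (n+1) \<le> real (k+1) * 1" using dep by simp
    also have "\<dots> \<le> real (k+1) * (\<Sum>m\<le>n. s m)" using H1 Hk by (intro mult_left_mono) auto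
    finally show ?thesis .
  qed
  with avg have "\<rho> * real (n+1) \<le> real (n+1) * (\<Sum>m\<le>k. s m)" by linarith
  then have "\<rho> \<le> (\<Sum>m\<le>k. s m)" by (simp add: mult.commute)
  then show ?thesis using Hy h_def by simp
qed

lemma arc_mono:
  assumes "tree_le t y" shows "arc y \<subseteq> arc t"
proof -
  obtain m i n j where ty: "t = (m,i)" "y = (n,j)" by (metis prod.exhaust)
  have mn: "m \<le> n" and ij: "j div 2^(n-m) = i" using assms ty by (auto simp: tree_le_iff)
  define q where "q = (2::nat)^(n-m)"
  have q0: "q > 0" unfolding q_def by simp
  have lo: "i * q \<le> j" using ij div_times_less_eq_dividend[of j "2^(n-m)"] unfolding q_def by simp
  have hi: "j + 1 \<le> (i+1) * q" using ij dividend_less_times_div[OF q0[unfolded q_def], of j] unfolding q_def by (simp add: algebra_simps)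
  have pw: "(2::real)^n = 2^m * real q" unfolding q_def using mn by (simp flip: power_add)
  have lo': "real i / 2^m \<le> real j / 2^n"
  proof -
    have "real (i * q) \<le> real j" using lo by (simp only: of_nat_le_iff)
    then have "real i * real q \<le> real j" by simp
    then show ?thesis unfolding pw using q0 by (simp add: field_simps)
  qed
  have hi': "(real j + 1) / 2^n \<le> (real i + 1) / 2^m"
  proof -
    have "real (j + 1) \<le> real ((i+1) * q)" using hi by (simp only: of_nat_le_iff)
    then have "real j + 1 \<le> (real i + 1) * real q" by (simp add: algebra_simps)
    then have "(real j + 1) / (2^m * real q) \<le> ((real i + 1) * real q) / (2^m * real q)"
      by (rule divide_right_mono) simp
    also have "\<dots> = (real i + 1) / 2^m" using q0 by simp
    finally show ?thesis unfolding pw .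
  qed
  show ?thesis
  proof
    fix z assume "z \<in> arc y"
    then obtain u where u: "z = exp (\<i> * complex_of_real u)" "2 * pi * real j / 2 ^ n \<le> u" "u < 2 * pi * (real j + 1) / 2 ^ n"
      unfolding arc_def ty by auto
    have "2 * pi * real i / 2^m \<le> 2 * pi * real j / 2^n"
      using lo' mult_left_mono[OF lo', of "2*pi"] by (simp add: field_simps)
    moreover have "2 * pi * (real j + 1) / 2^n \<le> 2 * pi * (real i + 1) / 2^m"
      using mult_left_mono[OF hi', of "2*pi"] by (simp add: field_simps)
    ultimately show "z \<in> arc t" unfolding arc_def ty using u by auto
  qed
qed


theorem mainTheorem5:
  fixes W :: "vertex set" and \<rho> :: real
  assumes "stopping_time W" and "0 < \<rho>" and "\<rho> < 1"
  shows "shadow (blowup \<rho> W) \<subseteq> shadow (cap_blowup \<rho> W)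
         \<and> capacity (blowup \<rho> W) \<le> capacity W / \<rho>\<^sup>2"
proof
  have W: "W \<subseteq> dyadic_tree" using assms(1) unfolding stopping_time_def by auto
  define h where "h = cap_minimizer W"
  define H where "H = potential h"
  have hp: "admissible W h" "l2_sq h = capacity W" using cap_minimizer_props[OF W] h_def by auto
  have blow: "\<exists>\<kappa>\<in>W. y = Rrho \<rho> \<kappa>" if "y \<in> blowup \<rho> W" for y
    using that unfolding blowup_def minimal_elements_def by auto
  show "shadow (blowup \<rho> W) \<subseteq> shadow (cap_blowup \<rho> W)"
  proof -
    have "\<exists>t\<in>cap_blowup \<rho> W. tree_le t y" if y: "y \<in> blowup \<rho> W" for y
    proof -
      obtain \<kappa> where k: "\<kappa> \<in> W" "y = Rrho \<rho> \<kappa>" using blow[OF y] by auto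
      have kt: "\<kappa> \<in> dyadic_tree" using k W by auto
      obtain n j where kk: "\<kappa> = (n,j)" by (metis prod.exhaust)
      have jn: "j < 2^n" using kt kk by (simp add: in_tree)
      obtain k i where yy: "y = (k,i)" by (metis prod.exhaust)
      have R: "tree_le y \<kappa>" using Rrho_props[OF kt assms(2,3)] k by auto
      have kn: "k \<le> n" and ii: "i = j div 2^(n-k)" using R yy kk by (auto simp: tree_le_iff)
      have Hy: "\<rho> \<le> H y" using H_ge[OF assms k(1)] k H_def h_def by simp
      define A where "A = {m. m \<le> k \<and> \<rho> \<le> H (m, j div 2^(n-m))}"
      have kA: "k \<in> A" using Hy yy ii unfolding A_def by simp
      define m0 where "m0 = (LEAST m. m \<in> A)"
      have m0A: "m0 \<in> A" unfolding m0_def using kA by (rule LeastI)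
      have m0k: "m0 \<le> k" using m0A unfolding A_def by simp
      define t where "t = (m0, j div 2^(n-m0))"
      have tk: "tree_le t \<kappa>" unfolding t_def kk using m0k kn by (simp add: tree_le_iff)
      have tt: "t \<in> dyadic_tree" using anc_in_tree[OF tk kt] .
      have ty: "tree_le t y" unfolding t_def yy ii using m0k kn div_div_pow[of m0 k n j]
        by (simp add: tree_le_iff)
      have below: "H x \<le> \<rho>" if x: "tree_less x t" for x
      proof -
        obtain m' i' where xx: "x = (m',i')" by (metis prod.exhaust)
        have "m' \<le> m0" "i' = j div 2^(n-m0) div 2^(m0-m')" "x \<noteq> t"
          using x xx unfolding tree_less_def t_def by (auto simp: tree_le_iff)
        then have m': "m' < m0" "i' = j div 2^(n-m')"
          using div_div_pow[of m' m0 n j] m0k kn xx t_def by (auto simp: order.order_iff_strict)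
        then have "m' \<notin> A" unfolding m0_def using not_less_Least by blast
        then show ?thesis using m' m0k xx unfolding A_def by auto
      qed
      have "t \<in> cap_blowup \<rho> W"
        unfolding cap_blowup_def Let_def geodesic_union_def
        using tt tk k(1) m0A below unfolding A_def t_def H_def h_def by auto
      then show ?thesis using ty by blast
    qed
    then show ?thesis unfolding shadow_def using arc_mono by blast
  qed
  show "capacity (blowup \<rho> W) \<le> capacity W / \<rho>\<^sup>2"
  proof -
    define g where "g x = h x / \<rho>" for x
    have gsq: "(\<lambda>x. (g x)\<^sup>2) = (\<lambda>x. (h x)\<^sup>2 * (1/\<rho>\<^sup>2))" unfolding g_def by (simp add: power_divide)
    have hs: "(\<lambda>x. (h x)\<^sup>2) summable_on dyadic_tree" using hp(1) unfolding admissible_def by auto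
    have ga: "admissible (blowup \<rho> W) g"
    proof -
      have "1 \<le> potential g y" if y: "y \<in> blowup \<rho> W" for y
      proof -
        obtain \<kappa> where k: "\<kappa> \<in> W" "y = Rrho \<rho> \<kappa>" using blow[OF y] by auto
        have "\<rho> \<le> potential h y" using H_ge[OF assms k(1)] k h_def by simp
        moreover have "potential g y = potential h y / \<rho>"
          unfolding potential_def g_def by (simp add: sum_divide_distrib)
        ultimately show ?thesis using assms(2) by simp
      qed
      moreover have "(\<lambda>x. (g x)\<^sup>2) summable_on dyadic_tree" unfolding gsq
        by (rule summable_on_cmult_left[OF hs])
      ultimately show ?thesis using hp(1) unfolding admissible_def g_def by auto
    qed
    have "l2_sq g = capacity W / \<rho>\<^sup>2"
      unfolding l2_sq_def gsq using infsum_cmult_left[of "1/\<rho>\<^sup>2" "\<lambda>x. (h x)\<^sup>2" dyadic_tree] hs hp(2)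
      unfolding l2_sq_def by simp
    then show ?thesis using cap_lower[OF ga] by simp
  qed
qed

end
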